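(* Let $\Gamma$ be a weakly distance-regular digraph, let $q\ge3$, and let $(x_0,x_1,\dots,x_{m-1})$ be a circuit consisting of arcs of type $(1,q-1)$ whose length $m$ is minimal among all circuits of $\Gamma$ consisting of arcs of type $(1,q-1)$. Let $(a,b)=\tilde\partial(x_0,x_2)$ and assume $k_{1,q-1}\ge k_{a,b}$. For each $i$ (indices read modulo $m$) let $Y_i=P_{(1,q-1),(1,q-1)}(x_{i-1},x_{i+1})$. If $p_{(1,q-1),(1,q-1)}^{(2,q-2)}>0$ or $|\Gamma_{1,q-1}^2|=1$, then for all $i$ we have $(x_{i-1},x_{i+1})\in\Gamma_{a,b}$ and \[P_{(a,b),(q-1,1)}(x_{i-2},x_{i-1})=P_{(q-1,1),(a,b)}(x_{i+1},x_{i+2})=Y_i.\] Moreover, if $q>3$ and $\Gamma$ is a Cayley digraph of an additive group, then $Y_i-x_{i-1}=Y_{i+1}-x_i$ for all $i$.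
   Context: Digraphs are finite and simple. $\partial(x,y)$ is the length of a shortest directed path from $x$ to $y$; $\tilde\partial(x,y)=(\partial(x,y),\partial(y,x))$; $\Gamma_{\tilde i}=\{(x,y):\tilde\partial(x,y)=\tilde i\}$, and $\Gamma_{a,b}$ means $\Gamma_{(a,b)}$. A strongly connected digraph $\Gamma$ is weakly distance-regular if $(V\Gamma,\{\Gamma_{\tilde i}\})$ is an association scheme. For pairs $\tilde i,\tilde j$ and vertices $x,y$, $P_{\tilde i,\tilde j}(x,y)=\{z:\tilde\partial(x,z)=\tilde i,\ \tilde\partial(z,y)=\tilde j\}$, and $p_{\tilde i,\tilde j}^{\tilde l}=|P_{\tilde i,\tilde j}(x,y)|$ for any $(x,y)\in\Gamma_{\tilde l}$ (taken to be $0$ if $\tilde l$ is not a two-way distance of $\Gamma$). $k_{a,b}=|\{y:\tilde\partial(x,y)=(a,b)\}|$ is the valency. $\Gamma_{1,q-1}^2$ is the set of relations $\Gamma_{\tilde l}$ with $p_{(1,q-1),(1,q-1)}^{\tilde l}\ne0$. An arc $(u,v)$ is of type $(1,r)$ if $\partial(v,u)=r$. A circuit is a closed directed path with distinct vertices. A Cayley digraph of an additive group $G$ with respect to $S\subseteq G\setminus\{0\}$ has vertex set $G$ and arcs $(x,y)$ with $y-x\in S$; for a set $Y$ and element $x$, $Y-x=\{y-x:y\in Y\}$. *)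

theory Defs
  imports "HOL-Algebra.Group"
begin

definition simple_digraph :: "'a set \<Rightarrow> ('a \<times> 'a) set \<Rightarrow> bool" where
  "simple_digraph V A \<longleftrightarrow> finite V \<and> A \<subseteq> V \<times> V \<and> (\<forall>x. (x, x) \<notin> A)"

definition ddist :: "('a \<times> 'a) set \<Rightarrow> 'a \<Rightarrow> 'a \<Rightarrow> nat" where
  "ddist A x y = (LEAST n. (x, y) \<in> A ^^ n)"

definition tdist :: "('a \<times> 'a) set \<Rightarrow> 'a \<Rightarrow> 'a \<Rightarrow> nat \<times> nat" where
  "tdist A x y = (ddist A x y, ddist A y x)"

definition Pset :: "'a set \<Rightarrow> ('a \<times> 'a) set \<Rightarrow> nat \<times> nat \<Rightarrow> nat \<times> nat \<Rightarrow> 'a \<Rightarrow> 'a \<Rightarrow> 'a set" where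
  "Pset V A i j x y = {z \<in> V. tdist A x z = i \<and> tdist A z y = j}"

definition strongly_connected :: "'a set \<Rightarrow> ('a \<times> 'a) set \<Rightarrow> bool" where
  "strongly_connected V A \<longleftrightarrow> V \<noteq> {} \<and> (\<forall>x\<in>V. \<forall>y\<in>V. (x, y) \<in> A\<^sup>*)"

text \<open>Weakly distance-regular: the two-way distance relations form an association
  scheme. The remaining axioms (diagonal relation, partition, closure under transpose)
  hold automatically, so the content is that the intersection numbers are well defined.\<close>
definition wdrg :: "'a set \<Rightarrow> ('a \<times> 'a) set \<Rightarrow> bool" where
  "wdrg V A \<longleftrightarrow> simple_digraph V A \<and> strongly_connected V A \<and>
     (\<forall>x\<in>V. \<forall>y\<in>V. \<forall>x'\<in>V. \<forall>y'\<in>V. tdist A x y = tdist A x' y' \<longrightarrow>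
        (\<forall>i j. card (Pset V A i j x y) = card (Pset V A i j x' y')))"

text \<open>Intersection number p^l_{i,j}; 0 if l is not a two-way distance.\<close>
definition pnum :: "'a set \<Rightarrow> ('a \<times> 'a) set \<Rightarrow> nat \<times> nat \<Rightarrow> nat \<times> nat \<Rightarrow> nat \<times> nat \<Rightarrow> nat" where
  "pnum V A i j l =
     (if \<exists>x\<in>V. \<exists>y\<in>V. tdist A x y = l
      then (let p = (SOME p. p \<in> V \<times> V \<and> tdist A (fst p) (snd p) = l)
            in card (Pset V A i j (fst p) (snd p)))
      else 0)"

definition kval :: "'a set \<Rightarrow> ('a \<times> 'a) set \<Rightarrow> nat \<times> nat \<Rightarrow> nat" where
  "kval V A ab = card {y \<in> V. tdist A (SOME x. x \<in> V) y = ab}"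

definition type_circuit :: "('a \<times> 'a) set \<Rightarrow> nat \<Rightarrow> 'a list \<Rightarrow> bool" where
  "type_circuit A r xs \<longleftrightarrow> xs \<noteq> [] \<and> distinct xs \<and>
     (\<forall>i < length xs. (xs ! i, xs ! ((i + 1) mod length xs)) \<in> A \<and>
        ddist A (xs ! ((i + 1) mod length xs)) (xs ! i) = r)"

definition cyc :: "'a list \<Rightarrow> int \<Rightarrow> 'a" where
  "cyc xs i = xs ! nat (i mod int (length xs))"

end

theory Submission
  imports Defs
begin

lemma relpow_walk:
  assumes "\<forall>t<n. (p (j+t), p (Suc (j+t))) \<in> A"
  shows "(p j, p (j+n)) \<in> A ^^ n"
  using assms
proof (induction n)
  case 0 then show ?case by simp
next
  case (Suc n)
  then have "(p j, p (j+n)) \<in> A ^^ n" by simp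
  moreover have "(p (j+n), p (Suc (j+n))) \<in> A" using Suc.prems by simp
  ultimately show ?case by (auto intro: relpow_Suc_I)
qed

lemma ddist_le: "(x,y) \<in> A ^^ n \<Longrightarrow> ddist A x y \<le> n"
  unfolding ddist_def by (rule Least_le)

lemma ddist_reach: "(x,y) \<in> A\<^sup>* \<Longrightarrow> (x,y) \<in> A ^^ (ddist A x y)"
  unfolding ddist_def by (metis LeastI_ex rtrancl_power)

lemma ddist_tri:
  assumes "(x,y) \<in> A\<^sup>*" "(y,z) \<in> A\<^sup>*"
  shows "ddist A x z \<le> ddist A x y + ddist A y z"
proof -
  have "(x,z) \<in> A ^^ (ddist A x y + ddist A y z)"
    using ddist_reach[OF assms(1)] ddist_reach[OF assms(2)] by (auto simp: relpow_add)
  then show ?thesis by (rule ddist_le)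
qed

lemma ddist_self[simp]: "ddist A x x = 0"
  using ddist_le[where x=x and y=x and A=A and n=0] by simp

lemma ddist_0: "(x,y) \<in> A\<^sup>* \<Longrightarrow> ddist A x y = 0 \<Longrightarrow> x = y"
  using ddist_reach[of x y A] by simp

lemma ddist_1: "(x,y) \<in> A\<^sup>* \<Longrightarrow> ddist A x y = 1 \<Longrightarrow> (x,y) \<in> A"
  using ddist_reach[of x y A] by simp

lemma arc_ddist: "(x,y) \<in> A \<Longrightarrow> ddist A x y \<le> 1"
  using ddist_le[where x=x and y=y and A=A and n=1] by simp

lemma wdrg_reach: "wdrg V A \<Longrightarrow> x \<in> V \<Longrightarrow> y \<in> V \<Longrightarrow> (x,y) \<in> A\<^sup>*"
  unfolding wdrg_def strongly_connected_def by blast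

lemma wdrg_arcV: "wdrg V A \<Longrightarrow> (x,y) \<in> A \<Longrightarrow> x \<in> V \<and> y \<in> V"
  unfolding wdrg_def simple_digraph_def by blast

lemma wdrg_finite: "wdrg V A \<Longrightarrow> finite V"
  unfolding wdrg_def simple_digraph_def by blast

lemma wdrg_noloop: "wdrg V A \<Longrightarrow> (x,x) \<notin> A"
  unfolding wdrg_def simple_digraph_def by blast


lemma tdist_swap: "tdist A y x = prod.swap (tdist A x y)"
  by (simp add: tdist_def)

lemma tdist_swap_iff: "tdist A y x = l \<longleftrightarrow> tdist A x y = prod.swap l"
  by (cases l) (auto simp: tdist_def prod_eq_iff)

lemma W1:
  assumes "wdrg V A" "x \<in> V" "y \<in> V" "x' \<in> V" "y' \<in> V" "tdist A x y = tdist A x' y'"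
  shows "card (Pset V A i j x y) = card (Pset V A i j x' y')"
  using assms unfolding wdrg_def by blast

lemma W2:
  assumes "wdrg V A" "x \<in> V" "y \<in> V"
  shows "pnum V A i j (tdist A x y) = card (Pset V A i j x y)"
proof -
  have ex: "\<exists>p. p \<in> V \<times> V \<and> tdist A (fst p) (snd p) = tdist A x y"
    using assms by (intro exI[of _ "(x,y)"]) auto
  define p where "p = (SOME p. p \<in> V \<times> V \<and> tdist A (fst p) (snd p) = tdist A x y)"
  have p: "p \<in> V \<times> V \<and> tdist A (fst p) (snd p) = tdist A x y"
    unfolding p_def by (rule someI_ex[OF ex])
  have "pnum V A i j (tdist A x y) = card (Pset V A i j (fst p) (snd p))"
    unfolding pnum_def p_def[symmetric] using assms by (auto simp: Let_def)
  also have "\<dots> = card (Pset V A i j x y)"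
    using p assms by (intro W1) auto
  finally show ?thesis .
qed

lemma Pset_finite: assumes "wdrg V A" shows "finite (Pset V A i j x y)"
  unfolding Pset_def by (rule finite_subset[OF _ wdrg_finite[OF assms]]) auto

lemma valency:
  assumes "wdrg V A" "x \<in> V"
  shows "card {y \<in> V. tdist A x y = l} = kval V A l"
proof -
  have V: "V \<noteq> {}" using assms by auto
  define x0 where "x0 = (SOME x. x \<in> V)"
  have x0: "x0 \<in> V" unfolding x0_def using V by (simp add: some_in_eq)
  have e: "\<And>u. {y \<in> V. tdist A u y = l} = Pset V A l (prod.swap l) u u"
    unfolding Pset_def by (auto simp: tdist_def prod_eq_iff)
  have "card (Pset V A l (prod.swap l) x x) = card (Pset V A l (prod.swap l) x0 x0)"
    using assms x0 by (intro W1) (auto simp: tdist_def prod_eq_iff)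
  then show ?thesis unfolding kval_def x0_def[symmetric] e by simp
qed

lemma double_count:
  assumes "finite X" "finite Z"
    and "\<And>x y. (x \<in> X \<and> y \<in> B x) \<longleftrightarrow> (y \<in> Z \<and> x \<in> C y)"
    and "\<And>x. x \<in> X \<Longrightarrow> finite (B x)" "\<And>y. y \<in> Z \<Longrightarrow> finite (C y)"
    and "\<And>x. x \<in> X \<Longrightarrow> card (B x) = b" "\<And>y. y \<in> Z \<Longrightarrow> card (C y) = c"
  shows "card X * b = card Z * c"
proof -
  have e: "Sigma X B = prod.swap ` Sigma Z C"
    apply (auto simp: image_iff)
    using assms(3) by blast+
  have "card (Sigma X B) = card X * b" using assms by simp
  moreover have "card (Sigma Z C) = card Z * c" using assms by simp
  moreover have "card (prod.swap ` Sigma Z C) = card (Sigma Z C)"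
    by (rule card_image) (simp add: inj_on_def)
  ultimately show ?thesis using e by simp
qed

lemma kval_swap:
  assumes "wdrg V A"
  shows "kval V A (prod.swap l) = kval V A l"
proof -
  have fin: "finite V" using wdrg_finite[OF assms] .
  have V: "V \<noteq> {}" using assms by (auto simp: wdrg_def strongly_connected_def)
  obtain a b where l: "l = (a,b)" by (cases l)
  have "card V * kval V A l = card V * kval V A (prod.swap l)"
    apply (rule double_count[where B="\<lambda>x. {y \<in> V. tdist A x y = l}" and C="\<lambda>y. {x \<in> V. tdist A y x = prod.swap l}"])
    using fin valency[OF assms] by (auto simp: tdist_def prod_eq_iff l)
  then show ?thesis using V fin by simp
qed

lemma count1:
  assumes "wdrg V A" "x \<in> V" "y \<in> V" "x' \<in> V" "y' \<in> V"
    "tdist A x y = \<alpha>" "tdist A x' y' = \<gamma>"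
  shows "card (Pset V A \<gamma> (prod.swap \<beta>) x y) * kval V A \<alpha> = card (Pset V A \<alpha> \<beta> x' y') * kval V A \<gamma>"
proof -
  have fin: "finite V" using wdrg_finite[OF assms(1)] .
  have "card {u \<in> V. tdist A x u = \<alpha>} * card (Pset V A \<gamma> (prod.swap \<beta>) x y)
      = card {w \<in> V. tdist A x w = \<gamma>} * card (Pset V A \<alpha> \<beta> x' y')"
  proof (rule double_count[where B="\<lambda>u. Pset V A \<gamma> (prod.swap \<beta>) x u" and C="\<lambda>w. Pset V A \<alpha> \<beta> x w"])
    show "finite {u \<in> V. tdist A x u = \<alpha>}" "finite {w \<in> V. tdist A x w = \<gamma>}" using fin by auto
    show "\<And>u w. (u \<in> {u \<in> V. tdist A x u = \<alpha>} \<and> w \<in> Pset V A \<gamma> (prod.swap \<beta>) x u) =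
          (w \<in> {w \<in> V. tdist A x w = \<gamma>} \<and> u \<in> Pset V A \<alpha> \<beta> x w)"
      unfolding Pset_def by (auto simp: tdist_def prod_eq_iff)
    show "\<And>u. finite (Pset V A \<gamma> (prod.swap \<beta>) x u)" "\<And>w. finite (Pset V A \<alpha> \<beta> x w)"
      using Pset_finite[OF assms(1)] by auto
    show "\<And>u. u \<in> {u \<in> V. tdist A x u = \<alpha>} \<Longrightarrow> card (Pset V A \<gamma> (prod.swap \<beta>) x u) = card (Pset V A \<gamma> (prod.swap \<beta>) x y)"
      using assms by (intro W1) auto
    show "\<And>w. w \<in> {w \<in> V. tdist A x w = \<gamma>} \<Longrightarrow> card (Pset V A \<alpha> \<beta> x w) = card (Pset V A \<alpha> \<beta> x' y')"
      using assms by (intro W1) auto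
  qed
  then show ?thesis using valency[OF assms(1,2)] by (simp add: mult.commute)
qed

lemma count2:
  assumes "wdrg V A" "x \<in> V" "y \<in> V" "x' \<in> V" "y' \<in> V"
    "tdist A x y = \<alpha>" "tdist A x' y' = \<gamma>"
  shows "card (Pset V A (prod.swap \<beta>) \<gamma> x y) * kval V A \<alpha> = card (Pset V A \<beta> \<alpha> x' y') * kval V A \<gamma>"
proof -
  have fin: "finite V" using wdrg_finite[OF assms(1)] .
  have "card {u \<in> V. tdist A u y = \<alpha>} * card (Pset V A (prod.swap \<beta>) \<gamma> x y)
      = card {w \<in> V. tdist A w y = \<gamma>} * card (Pset V A \<beta> \<alpha> x' y')"
  proof (rule double_count[where B="\<lambda>u. Pset V A (prod.swap \<beta>) \<gamma> u y" and C="\<lambda>w. Pset V A \<beta> \<alpha> w y"])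
    show "finite {u \<in> V. tdist A u y = \<alpha>}" "finite {w \<in> V. tdist A w y = \<gamma>}" using fin by auto
    show "\<And>u w. (u \<in> {u \<in> V. tdist A u y = \<alpha>} \<and> w \<in> Pset V A (prod.swap \<beta>) \<gamma> u y) =
          (w \<in> {w \<in> V. tdist A w y = \<gamma>} \<and> u \<in> Pset V A \<beta> \<alpha> w y)"
      unfolding Pset_def by (auto simp: tdist_def prod_eq_iff)
    show "\<And>u. finite (Pset V A (prod.swap \<beta>) \<gamma> u y)" "\<And>w. finite (Pset V A \<beta> \<alpha> w y)"
      using Pset_finite[OF assms(1)] by auto
    show "\<And>u. u \<in> {u \<in> V. tdist A u y = \<alpha>} \<Longrightarrow> card (Pset V A (prod.swap \<beta>) \<gamma> u y) = card (Pset V A (prod.swap \<beta>) \<gamma> x y)"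
      using assms by (intro W1) auto
    show "\<And>w. w \<in> {w \<in> V. tdist A w y = \<gamma>} \<Longrightarrow> card (Pset V A \<beta> \<alpha> w y) = card (Pset V A \<beta> \<alpha> x' y')"
      using assms by (intro W1) auto
  qed
  moreover have "\<And>l. card {u \<in> V. tdist A u y = l} = kval V A l"
  proof -
    fix l
    have "{u \<in> V. tdist A u y = l} = {u \<in> V. tdist A y u = prod.swap l}"
      by (auto simp: tdist_def prod_eq_iff)
    then show "card {u \<in> V. tdist A u y = l} = kval V A l"
      using valency[OF assms(1,3)] kval_swap[OF assms(1)] by simp
  qed
  ultimately show ?thesis by (simp add: mult.commute)
qed


definition garc :: "('a \<times> 'a) set \<Rightarrow> nat \<Rightarrow> 'a \<Rightarrow> 'a \<Rightarrow> bool" where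
  "garc A r u v \<longleftrightarrow> (u, v) \<in> A \<and> ddist A v u = r"

lemma garc_tdist:
  assumes "wdrg V A" "r \<ge> 1"
  shows "garc A r u v \<longleftrightarrow> u \<in> V \<and> v \<in> V \<and> tdist A u v = (1, r)"
proof
  assume g: "garc A r u v"
  then have a: "(u,v) \<in> A" and d: "ddist A v u = r" by (auto simp: garc_def)
  have V: "u \<in> V" "v \<in> V" using wdrg_arcV[OF assms(1) a] by auto
  have "u \<noteq> v" using d assms(2) by auto
  then have "ddist A u v \<noteq> 0" using ddist_0[OF wdrg_reach[OF assms(1) V]] by auto
  then have "ddist A u v = 1" using arc_ddist[OF a] by simp
  then show "u \<in> V \<and> v \<in> V \<and> tdist A u v = (1, r)" using V d by (simp add: tdist_def)
next
  assume h: "u \<in> V \<and> v \<in> V \<and> tdist A u v = (1, r)"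
  then have "(u,v) \<in> A" using ddist_1[OF wdrg_reach[OF assms(1)]] by (auto simp: tdist_def)
  then show "garc A r u v" using h by (auto simp: garc_def tdist_def)
qed

lemma cyc_period: "ys \<noteq> [] \<Longrightarrow> cyc ys (j + int (length ys)) = cyc ys j"
  by (simp add: cyc_def)

lemma cyc_period_mult: "ys \<noteq> [] \<Longrightarrow> cyc ys (j + k * int (length ys)) = cyc ys j"
  by (simp add: cyc_def)

lemma cyc_nth: "t < length ys \<Longrightarrow> cyc ys (int t) = ys ! t"
  by (simp add: cyc_def)

lemma cyc_Suc: "ys \<noteq> [] \<Longrightarrow> t < length ys \<Longrightarrow> cyc ys (int t + 1) = ys ! ((t + 1) mod length ys)"
proof -
  assume "ys \<noteq> []" "t < length ys"
  have "(int t + 1) mod int (length ys) = int ((t + 1) mod length ys)"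
    by (simp add: zmod_int ac_simps)
  then show ?thesis by (simp add: cyc_def)
qed

lemma cyc_reduce: "ys \<noteq> [] \<Longrightarrow> \<exists>t. t < length ys \<and> cyc ys j = cyc ys (int t) \<and> cyc ys (j+1) = cyc ys (int t + 1)"
proof -
  assume ne: "ys \<noteq> []"
  define n where "n = int (length ys)"
  have n: "n > 0" using ne by (simp add: n_def)
  define t where "t = nat (j mod n)"
  have t: "int t = j mod n" using n by (simp add: t_def)
  have tl: "t < length ys" using n t n_def by (metis Euclidean_Rings.pos_mod_bound of_nat_less_iff)
  have "j = int t + (j div n) * n" using t by simp
  then have e1: "cyc ys j = cyc ys (int t)" and e2: "cyc ys (j+1) = cyc ys (int t + 1)"
    using cyc_period_mult[OF ne, of "int t" "j div n"] cyc_period_mult[OF ne, of "int t + 1" "j div n"]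
    by (simp_all add: n_def algebra_simps)
  then show ?thesis using tl by blast
qed

lemma circuit_garc:
  assumes "type_circuit A r ys"
  shows "garc A r (cyc ys j) (cyc ys (j+1))"
proof -
  have ne: "ys \<noteq> []" using assms by (simp add: type_circuit_def)
  obtain t where t: "t < length ys" "cyc ys j = cyc ys (int t)" "cyc ys (j+1) = cyc ys (int t + 1)"
    using cyc_reduce[OF ne] by blast
  show ?thesis using assms t cyc_nth[OF t(1)] cyc_Suc[OF ne t(1)]
    by (auto simp: type_circuit_def garc_def)
qed

lemma int_walk:
  assumes "\<forall>j. (X j, X (j+1)) \<in> A"
  shows "(X j, X (j + int n)) \<in> A ^^ n"
proof -
  have "((\<lambda>t. X (j + int t)) 0, (\<lambda>t. X (j + int t)) (0 + n)) \<in> A ^^ n"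
    apply (rule relpow_walk)
    apply (intro allI impI)
    subgoal for t using assms[rule_format, of "j + int t"] by (simp add: algebra_simps)
    done
  then show ?thesis by simp
qed

lemma shorter_circuit:
  "0 < n \<Longrightarrow> f n = f 0 \<Longrightarrow> \<forall>t<n. garc A r (f t) (f (Suc t)) \<Longrightarrow> \<exists>ys. type_circuit A r ys \<and> length ys \<le> n"
proof (induction n arbitrary: f rule: less_induct)
  case (less n)
  show ?case
  proof (cases "inj_on f {0..<n}")
    case True
    define ys where "ys = map f [0..<n]"
    have "type_circuit A r ys"
      unfolding type_circuit_def
    proof (intro conjI allI impI)
      show "ys \<noteq> []" using less.prems by (simp add: ys_def)
      show "distinct ys" using True by (simp add: ys_def distinct_map)
      fix i assume i: "i < length ys"
      have nth: "ys ! ((i + 1) mod length ys) = f (Suc i)"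
      proof (cases "Suc i < n")
        case True then show ?thesis using i by (simp add: ys_def)
      next
        case False then have "Suc i = n" using i by (simp add: ys_def)
        then show ?thesis using less.prems by (simp add: ys_def)
      qed
      have g: "garc A r (f i) (f (Suc i))" using less.prems i by (simp add: ys_def)
      show "(ys ! i, ys ! ((i + 1) mod length ys)) \<in> A" using g i nth by (simp add: ys_def garc_def)
      show "ddist A (ys ! ((i + 1) mod length ys)) (ys ! i) = r" using g i nth by (simp add: ys_def garc_def)
    qed
    then show ?thesis by (auto simp: ys_def)
  next
    case False
    then obtain a b where ab: "a < n" "b < n" "a \<noteq> b" "f a = f b"
      by (auto simp: inj_on_def)
    obtain j k where jk: "j < k" "k < n" "f j = f k"
      using ab by (metis linorder_neqE_nat)
    have "\<forall>t<k-j. garc A r (f (j+t)) (f (Suc (j+t)))" using jk less.prems by auto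
    then have "\<exists>ys. type_circuit A r ys \<and> length ys \<le> k - j"
      using less.IH[of "k-j" "\<lambda>t. f (j+t)"] jk by auto
    then show ?thesis using jk by auto
  qed
qed

lemma noninj_shorter:
  assumes "0 < n" "f n = f 0" "\<forall>t<n. garc A r (f t) (f (Suc t))" "\<not> inj_on f {0..<n}"
  shows "\<exists>ys. type_circuit A r ys \<and> length ys < n"
proof -
  obtain a b where ab: "a < n" "b < n" "a \<noteq> b" "f a = f b"
    using assms(4) by (auto simp: inj_on_def)
  obtain j k where jk: "j < k" "k < n" "f j = f k"
    using ab by (metis linorder_neqE_nat)
  have "\<exists>ys. type_circuit A r ys \<and> length ys \<le> k - j"
    apply (rule shorter_circuit[where f="\<lambda>t. f (j + t)"])
    using jk assms by auto
  then show ?thesis using jk by auto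
qed

lemma cyc_circuit:
  assumes ne: "ys \<noteq> []" and g: "\<forall>j. garc A r (cyc ys j) (cyc ys (j+1))"
    and mn: "\<forall>zs. type_circuit A r zs \<longrightarrow> length ys \<le> length zs"
  shows "type_circuit A r ys"
proof -
  define n where "n = length ys"
  define f where "f t = cyc ys (int t)" for t
  have n0: "0 < n" using ne by (simp add: n_def)
  have fn: "f n = f 0" using cyc_period[OF ne, of 0] by (simp add: f_def n_def)
  have fg: "\<forall>t<n. garc A r (f t) (f (Suc t))"
  proof (intro allI impI)
    fix t have "garc A r (cyc ys (int t)) (cyc ys (int t + 1))" using g by blast
    then show "garc A r (f t) (f (Suc t))" by (simp add: f_def ac_simps)
  qed
  have inj: "inj_on f {0..<n}"
  proof (rule ccontr)
    assume "\<not> inj_on f {0..<n}"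
    then obtain zs where "type_circuit A r zs" "length zs < n" using noninj_shorter[OF n0 fn fg] by blast
    then show False using mn n_def by fastforce
  qed
  have fnth: "\<And>t. t < n \<Longrightarrow> f t = ys ! t" by (simp add: f_def cyc_nth n_def)
  have "distinct ys"
    unfolding distinct_conv_nth
  proof (intro allI impI)
    fix i j assume "i < length ys" "j < length ys" "i \<noteq> j"
    then show "ys ! i \<noteq> ys ! j" using inj fnth n_def by (metis atLeastLessThan_iff inj_on_def le0)
  qed
  moreover have "\<forall>i < length ys. (ys ! i, ys ! ((i + 1) mod length ys)) \<in> A \<and>
        ddist A (ys ! ((i + 1) mod length ys)) (ys ! i) = r"
  proof (intro allI impI)
    fix i assume i: "i < length ys"
    have "garc A r (cyc ys (int i)) (cyc ys (int i + 1))" using g by simp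
    then show "(ys ! i, ys ! ((i + 1) mod length ys)) \<in> A \<and>
        ddist A (ys ! ((i + 1) mod length ys)) (ys ! i) = r"
      using cyc_nth[OF i] cyc_Suc[OF ne i] by (simp add: garc_def)
  qed
  ultimately show ?thesis using ne by (simp add: type_circuit_def)
qed


lemma circ_tdist:
  assumes "wdrg V A" "q \<ge> 3" "type_circuit A (q-1) ys"
  shows "cyc ys j \<in> V" "tdist A (cyc ys j) (cyc ys (j+1)) = (1, q-1)"
  using circuit_garc[OF assms(3), of j] garc_tdist[OF assms(1), of "q-1"] assms(2) by auto

lemma squeeze:
  assumes "finite Z" "Y \<subseteq> Z" "card Z * kg = card Y * kL" "kL \<le> kg" "0 < kg"
  shows "Z = Y"
proof -
  have "card Z * kg \<le> card Y * kg" using assms(3,4) by (simp add: mult_le_mono2)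
  then have "card Z \<le> card Y" using assms(5) by simp
  moreover have "card Y \<le> card Z" using assms(1,2) by (simp add: card_mono)
  ultimately show ?thesis using card_subset_eq[OF assms(1,2)] by simp
qed

lemma partI:
  assumes w: "wdrg V A" and q: "q \<ge> 3" and c: "type_circuit A (q-1) ys"
    and L1: "\<forall>j. tdist A (cyc ys (j-1)) (cyc ys (j+1)) = L"
    and L2: "\<forall>j z. z \<in> Pset V A (1,q-1) (1,q-1) (cyc ys (j-1)) (cyc ys (j+1)) \<longrightarrow>
               tdist A (cyc ys (j-2)) z = L \<and> tdist A z (cyc ys (j+2)) = L"
    and kL: "kval V A L \<le> kval V A (1,q-1)"
  shows "Pset V A L (q-1,1) (cyc ys (j-2)) (cyc ys (j-1)) = Pset V A (1,q-1) (1,q-1) (cyc ys (j-1)) (cyc ys (j+1))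
       \<and> Pset V A (q-1,1) L (cyc ys (j+1)) (cyc ys (j+2)) = Pset V A (1,q-1) (1,q-1) (cyc ys (j-1)) (cyc ys (j+1))"
proof -
  let ?X = "cyc ys"
  let ?Y = "Pset V A (1,q-1) (1,q-1) (?X (j-1)) (?X (j+1))"
  have XV: "\<And>i. ?X i \<in> V" using circ_tdist[OF w q c] by blast
  have Xt: "\<And>i. tdist A (?X i) (?X (i+1)) = (1,q-1)" using circ_tdist[OF w q c] by blast
  have t1: "tdist A (?X (j-2)) (?X (j-1)) = (1,q-1)" using Xt[of "j-2"] by (simp add: algebra_simps)
  have t2: "tdist A (?X (j+1)) (?X (j+2)) = (1,q-1)" using Xt[of "j+1"] by (simp add: algebra_simps)
  have kpos: "0 < kval V A (1,q-1)"
  proof -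
    have "?X 1 \<in> {y \<in> V. tdist A (?X 0) y = (1,q-1)}" using XV Xt[of 0] by simp
    moreover have "finite {y \<in> V. tdist A (?X 0) y = (1,q-1)}" using wdrg_finite[OF w] by simp
    ultimately have "0 < card {y \<in> V. tdist A (?X 0) y = (1,q-1)}" by (auto simp: card_gt_0_iff)
    then show ?thesis using valency[OF w XV[of 0]] by simp
  qed
  have sw: "prod.swap (1::nat, q-1) = (q-1, 1)" by simp
  have c1: "card (Pset V A L (q-1,1) (?X (j-2)) (?X (j-1))) * kval V A (1,q-1) = card ?Y * kval V A L"
    using count1[OF w XV XV XV XV t1 L1[rule_format, of j], of "(1,q-1)"] by (simp only: sw)
  have c2: "card (Pset V A (q-1,1) L (?X (j+1)) (?X (j+2))) * kval V A (1,q-1) = card ?Y * kval V A L"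
    using count2[OF w XV XV XV XV t2 L1[rule_format, of j], of "(1,q-1)"] by (simp only: sw)
  have s1: "?Y \<subseteq> Pset V A L (q-1,1) (?X (j-2)) (?X (j-1))"
  proof
    fix z assume z: "z \<in> ?Y"
    then have "tdist A (?X (j-1)) z = (1,q-1)" "z \<in> V" by (auto simp: Pset_def)
    then have "tdist A z (?X (j-1)) = (q-1,1)" using tdist_swap[of A z "?X (j-1)"] by simp
    then show "z \<in> Pset V A L (q-1,1) (?X (j-2)) (?X (j-1))"
      using L2 z `z \<in> V` by (auto simp: Pset_def)
  qed
  have s2: "?Y \<subseteq> Pset V A (q-1,1) L (?X (j+1)) (?X (j+2))"
  proof
    fix z assume z: "z \<in> ?Y"
    then have "tdist A z (?X (j+1)) = (1,q-1)" "z \<in> V" by (auto simp: Pset_def)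
    then have "tdist A (?X (j+1)) z = (q-1,1)" using tdist_swap[of A "?X (j+1)" z] by simp
    then show "z \<in> Pset V A (q-1,1) L (?X (j+1)) (?X (j+2))"
      using L2 z `z \<in> V` by (auto simp: Pset_def)
  qed
  show ?thesis
    using squeeze[OF Pset_finite[OF w] s1 c1 kL kpos] squeeze[OF Pset_finite[OF w] s2 c2 kL kpos] by simp
qed


lemma relpow2: "(u,v) \<in> A \<Longrightarrow> (v,w) \<in> A \<Longrightarrow> (u,w) \<in> A ^^ 2"
  by (simp add: numeral_2_eq_2 relcomp.relcompI)

lemma GL:
  assumes w: "wdrg V A" and q: "q \<ge> 3"
    and uv: "garc A (q-1) u v" and vw: "(v,w) \<in> A"
    and p0: "p 0 = w" and pe: "p (q-2) = u" and pa: "\<forall>t<q-2. (p t, p (Suc t)) \<in> A"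
    and ga: "garc A (q-1) (p 0) (p 1) \<or> garc A (q-1) (p (q-3)) (p (q-2))"
  shows "tdist A u w = (2, q-2)"
proof -
  have uvA: "(u,v) \<in> A" and dvu: "ddist A v u = q-1" using uv by (auto simp: garc_def)
  have uV: "u \<in> V" and vV: "v \<in> V" using wdrg_arcV[OF w uvA] by auto
  have wV: "w \<in> V" using wdrg_arcV[OF w vw] by auto
  have R: "\<And>a b. a \<in> V \<Longrightarrow> b \<in> V \<Longrightarrow> (a,b) \<in> A\<^sup>*" using wdrg_reach[OF w] by blast
  have d_uw: "ddist A u w \<le> 2" using ddist_le[OF relpow2[OF uvA vw]] .
  have pw: "(p 0, p (0 + (q-2))) \<in> A ^^ (q-2)" by (rule relpow_walk) (use pa in auto)
  have d_wu: "ddist A w u \<le> q-2" using ddist_le[OF pw] p0 pe by simp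
  have "ddist A v u \<le> ddist A v w + ddist A w u" by (rule ddist_tri[OF R R]) (use uV vV wV in auto)
  moreover have "ddist A v w \<le> 1" using arc_ddist[OF vw] .
  ultimately have d_wu2: "ddist A w u = q-2" using dvu d_wu q by linarith
  have n0: "ddist A u w \<noteq> 0"
  proof
    assume "ddist A u w = 0"
    then have "u = w" using ddist_0[OF R[OF uV wV]] by simp
    then show False using dvu arc_ddist[OF vw] q by simp
  qed
  have n1: "ddist A u w \<noteq> 1"
  proof
    assume "ddist A u w = 1"
    then have uw: "(u,w) \<in> A" using ddist_1[OF R[OF uV wV]] by simp
    from ga show False
    proof
      assume g: "garc A (q-1) (p 0) (p 1)"
      have "(p 1, p (1 + (q-3))) \<in> A ^^ (q-3)" by (rule relpow_walk) (use pa q in auto)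
      moreover have "1 + (q-3) = q-2" using q by simp
      ultimately have "(p 1, u) \<in> A ^^ (q-3)" using pe by metis
      then have "(p 1, w) \<in> A ^^ Suc (q-3)" using uw by (rule relpow_Suc_I)
      then have "ddist A (p 1) w \<le> Suc (q-3)" by (rule ddist_le)
      then show False using g p0 q by (simp add: garc_def)
    next
      assume g: "garc A (q-1) (p (q-3)) (p (q-2))"
      have "(p 0, p (0 + (q-3))) \<in> A ^^ (q-3)" by (rule relpow_walk) (use pa q in auto)
      then have "(p 0, p (q-3)) \<in> A ^^ (q-3)" by simp
      then have "(u, p (q-3)) \<in> A ^^ Suc (q-3)" using uw p0 relpow_Suc_I2 by metis
      then have "ddist A u (p (q-3)) \<le> Suc (q-3)" by (rule ddist_le)
      then show False using g pe q by (simp add: garc_def)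
    qed
  qed
  have "ddist A u w = 2" using d_uw n0 n1 by linarith
  then show ?thesis using d_wu2 by (simp add: tdist_def)
qed


lemma circ_len_ge:
  assumes w: "wdrg V A" and c: "type_circuit A r ys"
  shows "r + 1 \<le> length ys"
proof -
  let ?X = "cyc ys"
  have ne: "ys \<noteq> []" using c by (simp add: type_circuit_def)
  define n where "n = length ys"
  have n: "n \<ge> 1" using ne by (simp add: n_def Suc_leI)
  have arcs: "\<forall>j. (?X j, ?X (j+1)) \<in> A" using circuit_garc[OF c] by (simp add: garc_def)
  have "(?X 1, ?X (1 + int (n-1))) \<in> A ^^ (n-1)" by (rule int_walk[OF arcs])
  moreover have "?X (1 + int (n-1)) = ?X 0" using cyc_period[OF ne, of 0] n by (simp add: n_def of_nat_diff)
  ultimately have "ddist A (?X 1) (?X 0) \<le> n - 1" using ddist_le by metis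
  moreover have "ddist A (?X 1) (?X 0) = r" using circuit_garc[OF c, of 0] by (simp add: garc_def)
  ultimately show ?thesis using n by (simp add: n_def)
qed

lemma mid_exists:
  assumes w: "wdrg V A" and q: "q \<ge> 3" and p: "pnum V A (1,q-1) (1,q-1) (2,q-2) > 0"
    and xy: "x \<in> V" "y \<in> V" "tdist A x y = (2,q-2)"
  shows "\<exists>z. garc A (q-1) x z \<and> garc A (q-1) z y"
proof -
  have "card (Pset V A (1,q-1) (1,q-1) x y) > 0" using W2[OF w xy(1,2)] p xy(3) by simp
  then obtain z where "z \<in> Pset V A (1,q-1) (1,q-1) x y" by (auto simp: card_gt_0_iff)
  then have "z \<in> V" "tdist A x z = (1,q-1)" "tdist A z y = (1,q-1)" by (auto simp: Pset_def)
  then show ?thesis using garc_tdist[OF w, of "q-1"] q xy by auto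
qed

lemma mod_Suc_eq_c:
  assumes "c q = c 0" "0 < q"
  shows "c (Suc t mod q) = c (Suc (t mod q))"
  using assms by (auto simp: mod_Suc)

lemma exists_short:
  assumes w: "wdrg V A" and q: "q \<ge> 3" and p: "pnum V A (1,q-1) (1,q-1) (2,q-2) > 0"
  shows "\<exists>ys. type_circuit A (q-1) ys \<and> length ys \<le> q"
proof -
  let ?P = "\<lambda>r. \<exists>c. c q = c 0 \<and> (\<forall>t<q. (c t, c (Suc t)) \<in> A) \<and> (\<forall>t<r. garc A (q-1) (c t) (c (Suc t)))"
  have ex: "\<exists>x\<in>V. \<exists>y\<in>V. tdist A x y = (2,q-2)"
    using p unfolding pnum_def by (auto split: if_splits)
  then obtain x0 y0 where x0: "x0 \<in> V" "y0 \<in> V" "tdist A x0 y0 = (2,q-2)" by blast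
  obtain z0 where z0: "garc A (q-1) x0 z0" "garc A (q-1) z0 y0" using mid_exists[OF w q p x0] by blast
  have "(y0, x0) \<in> A ^^ (q-2)"
    using ddist_reach[OF wdrg_reach[OF w x0(2,1)]] x0(3) by (simp add: tdist_def)
  then obtain pp where pp: "pp 0 = y0" "pp (q-2) = x0" "\<forall>i<q-2. (pp i, pp (Suc i)) \<in> A"
    by (auto simp: relpow_fun_conv)
  have base2: "?P 2"
  proof (intro exI conjI allI impI)
    let ?c = "\<lambda>t. if t = 0 then x0 else if t = 1 then z0 else pp (t-2)"
    show "?c q = ?c 0" using q pp by simp
    fix t :: nat
    { assume t: "t < q"
      show "(?c t, ?c (Suc t)) \<in> A"
      proof (cases "t \<le> 1")
        case True then show ?thesis using z0 pp by (cases t) (auto simp: garc_def)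
      next
        case False
        then have "t - 2 < q - 2" "Suc t - 2 = Suc (t-2)" using t by auto
        then show ?thesis using pp False by auto
      qed }
    { assume t: "t < 2"
      show "garc A (q-1) (?c t) (?c (Suc t))" using t z0 pp by (cases t) auto }
  qed
  have step: "\<And>r. 2 \<le> r \<Longrightarrow> r < q \<Longrightarrow> ?P r \<Longrightarrow> ?P (Suc r)"
  proof -
    fix r assume r2: "2 \<le> r" and rq: "r < q" and "?P r"
    then obtain c where cq: "c q = c 0" and ca: "\<forall>t<q. (c t, c (Suc t)) \<in> A"
      and cg: "\<forall>t<r. garc A (q-1) (c t) (c (Suc t))" by blast
    define c' where "c' t = c (t mod q)" for t
    have q0: "0 < q" using q by simp
    have c'le: "\<And>t. t \<le> q \<Longrightarrow> c' t = c t"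
      using cq by (auto simp: c'_def le_less)
    have c'a: "\<And>t. (c' t, c' (Suc t)) \<in> A"
      using ca mod_Suc_eq_c[OF cq q0] q0 by (simp add: c'_def)
    have c'mod: "\<And>t. c' (t + q) = c' t" by (simp add: c'_def)
    let ?u = "c (r-1)" and ?v = "c r" and ?w = "c (Suc r)"
    have "r - 1 < r" "Suc (r-1) = r" using r2 by auto
    then have uv: "garc A (q-1) ?u ?v" using cg by metis
    have vw: "(?v, ?w) \<in> A" using ca rq by blast
    define pw where "pw t = c' (Suc r + t)" for t
    have h1: "pw 0 = c (Suc r)" using c'le rq by (simp add: pw_def)
    have e1: "Suc r + (q-2) = (r - 1) + q" using r2 q by simp
    have h2: "pw (q-2) = c (r-1)" unfolding pw_def e1 c'mod using c'le rq by simp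
    have h3: "\<forall>t<q-2. (pw t, pw (Suc t)) \<in> A" using c'a by (simp add: pw_def)
    have e2: "Suc r + (q-3) = (r - 2) + q" using r2 q by simp
    have e3: "Suc (r-2) = r - 1" using r2 by simp
    have "garc A (q-1) (c (r-2)) (c (Suc (r-2)))" using cg r2 by simp
    then have "garc A (q-1) (pw (q-3)) (pw (q-2))"
      using h2 c'le rq e3 unfolding pw_def e2 c'mod by simp
    then have h4: "garc A (q-1) (pw 0) (pw 1) \<or> garc A (q-1) (pw (q-3)) (pw (q-2))" by blast
    have "tdist A ?u ?w = (2, q-2)" by (rule GL[OF w q uv vw h1 h2 h3 h4])
    moreover have "?u \<in> V" "?w \<in> V" using wdrg_arcV[OF w] uv vw by (auto simp: garc_def)
    ultimately obtain z where z: "garc A (q-1) ?u z" "garc A (q-1) z ?w"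
      using mid_exists[OF w q p] by blast
    define c2 where "c2 = c(r := z)"
    show "?P (Suc r)"
    proof (intro exI[of _ c2] conjI allI impI)
      show "c2 q = c2 0" using cq rq r2 by (simp add: c2_def)
      fix t :: nat
      { assume t: "t < q"
        show "(c2 t, c2 (Suc t)) \<in> A"
        proof (cases "t = r")
          case True then show ?thesis using z by (simp add: c2_def garc_def)
        next
          case False
          show ?thesis
          proof (cases "Suc t = r")
            case True then show ?thesis using z False by (auto simp: c2_def garc_def)
          next
            case False2: False
            then show ?thesis using ca t False by (simp add: c2_def)
          qed
        qed }
      { assume t: "t < Suc r"
        show "garc A (q-1) (c2 t) (c2 (Suc t))"
        proof (cases "t = r")
          case True then show ?thesis using z by (simp add: c2_def)
        next
          case False
          show ?thesis
          proof (cases "Suc t = r")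
            case True then show ?thesis using z False by (auto simp: c2_def)
          next
            case False2: False
            then show ?thesis using cg t False by (simp add: c2_def)
          qed
        qed }
    qed
  qed
  have all: "\<And>r. 2 \<le> r \<Longrightarrow> r \<le> q \<Longrightarrow> ?P r"
  proof -
    fix r assume "2 \<le> r" "r \<le> q"
    then show "?P r"
    proof (induction r rule: nat_induct_at_least)
      case base then show ?case using base2 by blast
    next
      case (Suc n)
      have "n < q" using Suc.prems by simp
      then have "?P n" using Suc.IH by simp
      then show ?case using step[OF Suc.hyps `n < q`] by blast
    qed
  qed
  have "?P q" using all[of q] q by simp
  then obtain c where c: "c q = c 0" "\<forall>t<q. garc A (q-1) (c t) (c (Suc t))" by blast
  show ?thesis by (rule shorter_circuit) (use c q in auto)
qed


definition Lprop :: "'a set \<Rightarrow> ('a \<times> 'a) set \<Rightarrow> nat \<Rightarrow> nat \<times> nat \<Rightarrow> 'a list \<Rightarrow> bool" where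
  "Lprop V A q L ys \<longleftrightarrow> (\<forall>j. tdist A (cyc ys (j-1)) (cyc ys (j+1)) = L) \<and>
     (\<forall>j z. z \<in> Pset V A (1,q-1) (1,q-1) (cyc ys (j-1)) (cyc ys (j+1)) \<longrightarrow>
               tdist A (cyc ys (j-2)) z = L \<and> tdist A z (cyc ys (j+2)) = L)"

lemma Pset_garc:
  assumes w: "wdrg V A" and q: "q \<ge> 3" and xy: "x \<in> V" "y \<in> V"
  shows "z \<in> Pset V A (1,q-1) (1,q-1) x y \<longleftrightarrow> garc A (q-1) x z \<and> garc A (q-1) z y"
  using garc_tdist[OF w, of "q-1"] q xy by (auto simp: Pset_def)

lemma caseB_props:
  assumes w: "wdrg V A" and q: "q \<ge> 3" and c: "type_circuit A (q-1) ys" and len: "length ys = q"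
  shows "Lprop V A q (2, q-2) ys"
proof -
  let ?X = "cyc ys"
  have ne: "ys \<noteq> []" using c by (simp add: type_circuit_def)
  have G: "\<And>i. garc A (q-1) (?X i) (?X (i+1))" using circuit_garc[OF c] by blast
  have Ar: "\<And>i. (?X i, ?X (i+1)) \<in> A" using G by (simp add: garc_def)
  have per: "\<And>i. ?X (i + int q) = ?X i" using cyc_period[OF ne] len by simp
  have iq2: "int (q-2) = int q - 2" "int (q-3) = int q - 3" using q by auto
  have XV: "\<And>i. ?X i \<in> V" using circ_tdist[OF w q c] by blast
  have L1: "\<And>j. tdist A (?X (j-1)) (?X (j+1)) = (2, q-2)"
  proof -
    fix j :: int
    define p where "p t = ?X (j + 1 + int t)" for t
    have uv: "garc A (q-1) (?X (j-1)) (?X j)" using G[of "j-1"] by simp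
    have vw: "(?X j, ?X (j+1)) \<in> A" using Ar by simp
    have h1: "p 0 = ?X (j+1)" by (simp add: p_def)
    have h2: "p (q-2) = ?X (j-1)" using per[of "j-1"] by (simp add: p_def iq2 algebra_simps)
    have h3: "\<forall>t<q-2. (p t, p (Suc t)) \<in> A"
    proof (intro allI impI)
      fix t :: nat show "(p t, p (Suc t)) \<in> A" using Ar[of "j + 1 + int t"] by (simp add: p_def algebra_simps)
    qed
    have h4: "garc A (q-1) (p 0) (p 1) \<or> garc A (q-1) (p (q-3)) (p (q-2))"
      using G[of "j+1"] by (simp add: p_def algebra_simps)
    show "tdist A (?X (j-1)) (?X (j+1)) = (2, q-2)" by (rule GL[OF w q uv vw h1 h2 h3 h4])
  qed
  have L2: "\<And>j z. z \<in> Pset V A (1,q-1) (1,q-1) (?X (j-1)) (?X (j+1)) \<Longrightarrow>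
               tdist A (?X (j-2)) z = (2,q-2) \<and> tdist A z (?X (j+2)) = (2,q-2)"
  proof
    fix j :: int and z assume "z \<in> Pset V A (1,q-1) (1,q-1) (?X (j-1)) (?X (j+1))"
    then have z1: "garc A (q-1) (?X (j-1)) z" and z2: "garc A (q-1) z (?X (j+1))"
      using Pset_garc[OF w q XV XV] by auto
    show "tdist A (?X (j-2)) z = (2,q-2)"
    proof -
      define p where "p t = (if t = 0 then z else ?X (j + int t))" for t
      have uv: "garc A (q-1) (?X (j-2)) (?X (j-1))" using G[of "j-2"] by simp
      have vw: "(?X (j-1), z) \<in> A" using z1 by (simp add: garc_def)
      have h1: "p 0 = z" by (simp add: p_def)
      have h2: "p (q-2) = ?X (j-2)" using per[of "j-2"] q by (simp add: p_def iq2 algebra_simps)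
      have h3: "\<forall>t<q-2. (p t, p (Suc t)) \<in> A"
      proof (intro allI impI)
        fix t :: nat assume "t < q-2"
        show "(p t, p (Suc t)) \<in> A"
        proof (cases "t = 0")
          case True then show ?thesis using z2 by (simp add: p_def garc_def)
        next
          case False then show ?thesis using Ar[of "j + int t"] by (simp add: p_def algebra_simps)
        qed
      qed
      have h4: "garc A (q-1) (p 0) (p 1) \<or> garc A (q-1) (p (q-3)) (p (q-2))"
        using z2 by (simp add: p_def)
      show ?thesis by (rule GL[OF w q uv vw h1 h2 h3 h4])
    qed
    show "tdist A z (?X (j+2)) = (2,q-2)"
    proof -
      define p where "p t = (if t = q-2 then z else ?X (j + 2 + int t))" for t
      have vw: "(?X (j+1), ?X (j+2)) \<in> A" using Ar[of "j+1"] by (simp add: algebra_simps)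
      have h1: "p 0 = ?X (j+2)" using q by (simp add: p_def)
      have h2: "p (q-2) = z" by (simp add: p_def)
      have x3: "?X (j + 2 + int (q-3)) = ?X (j-1)" using per[of "j-1"] q by (simp add: iq2 algebra_simps)
      have h3: "\<forall>t<q-2. (p t, p (Suc t)) \<in> A"
      proof (intro allI impI)
        fix t :: nat assume t: "t < q-2"
        show "(p t, p (Suc t)) \<in> A"
        proof (cases "Suc t = q-2")
          case True
          then have "t = q-3" by simp
          then show ?thesis using True z1 x3 t by (simp add: p_def garc_def)
        next
          case False then show ?thesis using t Ar[of "j + 2 + int t"] by (simp add: p_def algebra_simps)
        qed
      qed
      have "q - 3 \<noteq> q - 2" using q by simp
      then have h4: "garc A (q-1) (p 0) (p 1) \<or> garc A (q-1) (p (q-3)) (p (q-2))"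
        using z1 x3 by (simp add: p_def)
      show ?thesis by (rule GL[OF w q z2 vw h1 h2 h3 h4])
    qed
  qed
  show ?thesis unfolding Lprop_def using L1 L2 by blast
qed

lemma caseA_mid:
  assumes w: "wdrg V A" and q: "q \<ge> 3" and s: "{l. pnum V A (1,q-1) (1,q-1) l \<noteq> 0} = {L}"
    and uv: "garc A (q-1) u v" and vw: "garc A (q-1) v x"
  shows "tdist A u x = L"
proof -
  have V: "u \<in> V" "x \<in> V" using uv vw wdrg_arcV[OF w] by (auto simp: garc_def)
  have "v \<in> Pset V A (1,q-1) (1,q-1) u x" using Pset_garc[OF w q V] uv vw by blast
  then have "card (Pset V A (1,q-1) (1,q-1) u x) \<noteq> 0" using Pset_finite[OF w] by (auto simp: card_eq_0_iff)
  then have "pnum V A (1,q-1) (1,q-1) (tdist A u x) \<noteq> 0" using W2[OF w V] by simp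
  then show ?thesis using s by blast
qed

lemma caseA_props:
  assumes w: "wdrg V A" and q: "q \<ge> 3" and s: "{l. pnum V A (1,q-1) (1,q-1) l \<noteq> 0} = {L}"
    and c: "type_circuit A (q-1) ys"
  shows "Lprop V A q L ys"
proof -
  let ?X = "cyc ys"
  have G: "\<And>i. garc A (q-1) (?X i) (?X (i+1))" using circuit_garc[OF c] by blast
  have XV: "\<And>i. ?X i \<in> V" using circ_tdist[OF w q c] by blast
  have L1: "\<And>j. tdist A (?X (j-1)) (?X (j+1)) = L"
    using caseA_mid[OF w q s] G by (metis diff_add_cancel)
  have L2: "\<And>j z. z \<in> Pset V A (1,q-1) (1,q-1) (?X (j-1)) (?X (j+1)) \<Longrightarrow>
               tdist A (?X (j-2)) z = L \<and> tdist A z (?X (j+2)) = L"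
  proof -
    fix j :: int and z assume "z \<in> Pset V A (1,q-1) (1,q-1) (?X (j-1)) (?X (j+1))"
    then have z1: "garc A (q-1) (?X (j-1)) z" and z2: "garc A (q-1) z (?X (j+1))"
      using Pset_garc[OF w q XV XV] by auto
    have a: "garc A (q-1) (?X (j-2)) (?X (j-1))" using G[of "j-2"] by simp
    have b: "garc A (q-1) (?X (j+1)) (?X (j+2))" using G[of "j+1"] by (simp add: algebra_simps)
    show "tdist A (?X (j-2)) z = L \<and> tdist A z (?X (j+2)) = L"
      using caseA_mid[OF w q s a z1] caseA_mid[OF w q s z2 b] by simp
  qed
  show ?thesis unfolding Lprop_def using L1 L2 by blast
qed

lemma Lprops:
  assumes w: "wdrg V A" and q: "q \<ge> 3"
    and h: "pnum V A (1, q - 1) (1, q - 1) (2, q - 2) > 0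
         \<or> card {l. pnum V A (1, q - 1) (1, q - 1) l \<noteq> 0} = 1"
    and mn: "\<forall>ys. type_circuit A (q-1) ys \<longrightarrow> m \<le> length ys"
    and c0: "type_circuit A (q-1) xs0" "length xs0 = m"
  shows "\<exists>L. \<forall>ys. type_circuit A (q-1) ys \<and> length ys = m \<longrightarrow> Lprop V A q L ys"
  using h
proof
  assume p: "pnum V A (1, q - 1) (1, q - 1) (2, q - 2) > 0"
  obtain zs where "type_circuit A (q-1) zs" "length zs \<le> q" using exists_short[OF w q p] by blast
  then have "m \<le> q" using mn by force
  moreover have "q - 1 + 1 \<le> m" using circ_len_ge[OF w c0(1)] c0(2) by simp
  ultimately have "m = q" using q by simp
  then show ?thesis using caseB_props[OF w q] by blast
next
  assume "card {l. pnum V A (1, q - 1) (1, q - 1) l \<noteq> 0} = 1"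
  then obtain L where "{l. pnum V A (1, q - 1) (1, q - 1) l \<noteq> 0} = {L}" by (auto simp: card_1_singleton_iff)
  then show ?thesis using caseA_props[OF w q] by blast
qed


context comm_group begin
lemma cc1: "x \<in> carrier G \<Longrightarrow> z \<in> carrier G \<Longrightarrow> x \<otimes> (inv x \<otimes> z) = z"
  by (simp add: m_assoc[symmetric])
lemma cc2: "x \<in> carrier G \<Longrightarrow> z \<in> carrier G \<Longrightarrow> inv x \<otimes> (x \<otimes> z) = z"
  by (simp add: m_assoc[symmetric])
lemma cc3: "x \<in> carrier G \<Longrightarrow> y \<in> carrier G \<Longrightarrow> x \<otimes> (y \<otimes> inv x) = y"
  by (metis inv_closed m_comm m_closed cc1 r_one one_closed m_lcomm r_inv)
lemma cc4: "x \<in> carrier G \<Longrightarrow> y \<in> carrier G \<Longrightarrow> inv x \<otimes> (y \<otimes> x) = y"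
  by (metis inv_closed m_lcomm l_inv r_one)
lemma cc5: "x \<in> carrier G \<Longrightarrow> y \<in> carrier G \<Longrightarrow> z \<in> carrier G \<Longrightarrow> x \<otimes> (y \<otimes> (inv x \<otimes> z)) = y \<otimes> z"
  by (metis inv_closed m_lcomm cc1 m_closed)
lemma cc6: "x \<in> carrier G \<Longrightarrow> y \<in> carrier G \<Longrightarrow> z \<in> carrier G \<Longrightarrow> inv x \<otimes> (y \<otimes> (x \<otimes> z)) = y \<otimes> z"
  by (metis inv_closed m_lcomm cc2 m_closed)
lemma cc7: "x \<in> carrier G \<Longrightarrow> y \<in> carrier G \<Longrightarrow> z \<in> carrier G \<Longrightarrow> x \<otimes> (y \<otimes> (z \<otimes> inv x)) = y \<otimes> z"
  by (metis inv_closed m_lcomm cc3 m_closed)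
lemma cc8: "x \<in> carrier G \<Longrightarrow> y \<in> carrier G \<Longrightarrow> z \<in> carrier G \<Longrightarrow> inv x \<otimes> (y \<otimes> (z \<otimes> x)) = y \<otimes> z"
  by (metis inv_closed m_lcomm cc4 m_closed)
lemma cc9: "x \<in> carrier G \<Longrightarrow> y \<in> carrier G \<Longrightarrow> z \<in> carrier G \<Longrightarrow> w \<in> carrier G \<Longrightarrow> x \<otimes> (y \<otimes> (z \<otimes> (inv x \<otimes> w))) = y \<otimes> (z \<otimes> w)"
  by (metis inv_closed m_lcomm cc5 m_closed)
lemma cc10: "x \<in> carrier G \<Longrightarrow> y \<in> carrier G \<Longrightarrow> z \<in> carrier G \<Longrightarrow> w \<in> carrier G \<Longrightarrow> inv x \<otimes> (y \<otimes> (z \<otimes> (x \<otimes> w))) = y \<otimes> (z \<otimes> w)"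
  by (metis inv_closed m_lcomm cc6 m_closed)
lemmas gsimps = m_ac inv_mult cc1 cc2 cc3 cc4 cc5 cc6 cc7 cc8 cc9 cc10

end


locale cay = comm_group +
  fixes V :: "'a set" and A :: "('a \<times> 'a) set" and S :: "'a set"
  assumes V: "carrier G = V" and Adef: "A = {(x, y). x \<in> V \<and> y \<in> V \<and> y \<otimes>\<^bsub>G\<^esub> inv\<^bsub>G\<^esub> x \<in> S}"
begin

lemma arc_tr: "u \<in> V \<Longrightarrow> v \<in> V \<Longrightarrow> c \<in> V \<Longrightarrow> (u \<otimes> c, v \<otimes> c) \<in> A \<longleftrightarrow> (u,v) \<in> A"
proof -
  assume h: "u \<in> V" "v \<in> V" "c \<in> V"
  have c: "u \<in> carrier G" "v \<in> carrier G" "c \<in> carrier G" using h V by auto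
  have "(v \<otimes> c) \<otimes> inv (u \<otimes> c) = (v \<otimes> c) \<otimes> (inv c \<otimes> inv u)" using c by (simp add: inv_mult_group)
  also have "\<dots> = v \<otimes> (c \<otimes> (inv c \<otimes> inv u))" using c by (simp add: m_assoc)
  also have "c \<otimes> (inv c \<otimes> inv u) = inv u" using c by (simp add: m_assoc[symmetric])
  finally have "(v \<otimes> c) \<otimes> inv (u \<otimes> c) = v \<otimes> inv u" .
  then show ?thesis using h c by (simp add: Adef V[symmetric])
qed

lemma relpow_tr: "(u,v) \<in> A ^^ n \<Longrightarrow> u \<in> V \<Longrightarrow> c \<in> V \<Longrightarrow> (u \<otimes> c, v \<otimes> c) \<in> A ^^ n"
proof (induction n arbitrary: v)
  case 0 then show ?case by simp
next
  case (Suc n)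
  then obtain y where y: "(u,y) \<in> A ^^ n" "(y,v) \<in> A" by auto
  have yv: "y \<in> V" "v \<in> V" using y(2) by (auto simp: Adef)
  have "(u \<otimes> c, y \<otimes> c) \<in> A ^^ n" using Suc y by blast
  moreover have "(y \<otimes> c, v \<otimes> c) \<in> A" using arc_tr yv Suc.prems y(2) by blast
  ultimately show ?case by auto
qed

lemma relpow_tr_iff: "u \<in> V \<Longrightarrow> v \<in> V \<Longrightarrow> c \<in> V \<Longrightarrow> (u \<otimes> c, v \<otimes> c) \<in> A ^^ n \<longleftrightarrow> (u,v) \<in> A ^^ n"
proof
  assume h: "u \<in> V" "v \<in> V" "c \<in> V" "(u \<otimes> c, v \<otimes> c) \<in> A ^^ n"
  have "(u \<otimes> c \<otimes> inv c, v \<otimes> c \<otimes> inv c) \<in> A ^^ n"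
    by (rule relpow_tr) (use h V in auto)
  then show "(u,v) \<in> A ^^ n" using h by (simp add: m_assoc V[symmetric])
qed (rule relpow_tr)

lemma ddist_tr: "u \<in> V \<Longrightarrow> v \<in> V \<Longrightarrow> c \<in> V \<Longrightarrow> ddist A (u \<otimes> c) (v \<otimes> c) = ddist A u v"
  unfolding ddist_def using relpow_tr_iff by simp

lemma tdist_tr: "u \<in> V \<Longrightarrow> v \<in> V \<Longrightarrow> c \<in> V \<Longrightarrow> tdist A (u \<otimes> c) (v \<otimes> c) = tdist A u v"
  unfolding tdist_def using ddist_tr by simp

lemma garc_tr: "u \<in> V \<Longrightarrow> v \<in> V \<Longrightarrow> c \<in> V \<Longrightarrow> garc A r u v \<Longrightarrow> garc A r (u \<otimes> c) (v \<otimes> c)"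
  unfolding garc_def using arc_tr ddist_tr by simp

lemma Pset_tr:
  assumes "x \<in> V" "y \<in> V" "c \<in> V"
  shows "Pset V A i j (x \<otimes> c) (y \<otimes> c) = (\<lambda>z. z \<otimes> c) ` Pset V A i j x y"
proof
  show "(\<lambda>z. z \<otimes> c) ` Pset V A i j x y \<subseteq> Pset V A i j (x \<otimes> c) (y \<otimes> c)"
    using assms V by (auto simp: Pset_def tdist_tr)
  show "Pset V A i j (x \<otimes> c) (y \<otimes> c) \<subseteq> (\<lambda>z. z \<otimes> c) ` Pset V A i j x y"
  proof
    fix z assume z: "z \<in> Pset V A i j (x \<otimes> c) (y \<otimes> c)"
    then have zV: "z \<in> V" by (simp add: Pset_def)
    define z' where "z' = z \<otimes> inv c"
    have z'V: "z' \<in> V" using zV assms by (simp add: z'_def V[symmetric])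
    have zz: "z = z' \<otimes> c" using zV assms by (simp add: z'_def m_assoc V[symmetric])
    have "z' \<in> Pset V A i j x y"
      using z z'V assms unfolding zz by (simp add: Pset_def tdist_tr)
    then show "z \<in> (\<lambda>z. z \<otimes> c) ` Pset V A i j x y" using zz by blast
  qed
qed

lemma sym_P:
  assumes a: "a \<in> V" and b: "b \<in> V"
  shows "(\<lambda>y. y \<otimes> inv a) ` Pset V A i i a b = (\<lambda>y. b \<otimes> inv y) ` Pset V A i i a b"
proof -
  have aG: "a \<in> carrier G" and bG: "b \<in> carrier G" using a b V by auto
  have phi: "a \<otimes> b \<otimes> inv y \<in> Pset V A i i a b" if y: "y \<in> Pset V A i i a b" for y
  proof -
    have yV: "y \<in> V" and t1: "tdist A a y = i" and t2: "tdist A y b = i" using y by (auto simp: Pset_def)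
    have yG: "y \<in> carrier G" using yV V by auto
    have e1: "y \<otimes> (a \<otimes> inv y) = a" "b \<otimes> (a \<otimes> inv y) = a \<otimes> b \<otimes> inv y"
      using aG bG yG by (simp_all add: gsimps)
    have e2: "a \<otimes> (b \<otimes> inv y) = a \<otimes> b \<otimes> inv y" "y \<otimes> (b \<otimes> inv y) = b"
      using aG bG yG by (simp_all add: gsimps)
    have c1: "a \<otimes> inv y \<in> V" "b \<otimes> inv y \<in> V" using aG bG yG V by auto
    have "tdist A a (a \<otimes> b \<otimes> inv y) = tdist A y b"
      using tdist_tr[OF yV b c1(1)] e1 by simp
    moreover have "tdist A (a \<otimes> b \<otimes> inv y) b = tdist A a y"
      using tdist_tr[OF a yV c1(2)] e2 by simp
    moreover have "a \<otimes> b \<otimes> inv y \<in> V" using aG bG yG V by auto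
    ultimately show ?thesis using t1 t2 by (simp add: Pset_def)
  qed
  have ident1: "(a \<otimes> b \<otimes> inv y) \<otimes> inv a = b \<otimes> inv y" if "y \<in> V" for y
    using aG bG that by (simp add: gsimps V[symmetric])
  have ident2: "b \<otimes> inv (a \<otimes> b \<otimes> inv y) = y \<otimes> inv a" if "y \<in> V" for y
    using aG bG that by (simp add: gsimps V[symmetric])
  show ?thesis
  proof
    show "(\<lambda>y. y \<otimes> inv a) ` Pset V A i i a b \<subseteq> (\<lambda>y. b \<otimes> inv y) ` Pset V A i i a b"
    proof
      fix x assume "x \<in> (\<lambda>y. y \<otimes> inv a) ` Pset V A i i a b"
      then obtain y where y: "y \<in> Pset V A i i a b" "x = y \<otimes> inv a" by blast
      then have "y \<in> V" by (simp add: Pset_def)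
      then have "x = b \<otimes> inv (a \<otimes> b \<otimes> inv y)" using y ident2 by simp
      then show "x \<in> (\<lambda>y. b \<otimes> inv y) ` Pset V A i i a b" using phi[OF y(1)] by blast
    qed
    show "(\<lambda>y. b \<otimes> inv y) ` Pset V A i i a b \<subseteq> (\<lambda>y. y \<otimes> inv a) ` Pset V A i i a b"
    proof
      fix x assume "x \<in> (\<lambda>y. b \<otimes> inv y) ` Pset V A i i a b"
      then obtain y where y: "y \<in> Pset V A i i a b" "x = b \<otimes> inv y" by blast
      then have "y \<in> V" by (simp add: Pset_def)
      then have "x = (a \<otimes> b \<otimes> inv y) \<otimes> inv a" using y ident1 by simp
      then show "x \<in> (\<lambda>y. y \<otimes> inv a) ` Pset V A i i a b" using phi[OF y(1)] by blast
    qed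
  qed
qed

end


lemma cyc_mod_eq: "j mod int (length xs) = j' mod int (length xs) \<Longrightarrow> cyc xs j = cyc xs j'"
  by (simp add: cyc_def)

lemma cyc_update:
  assumes "p = nat (k mod int (length xs))" "xs \<noteq> []"
  shows "cyc (xs[p := z]) j = (if j mod int (length xs) = k mod int (length xs) then z else cyc xs j)"
proof -
  have n: "int (length xs) > 0" using assms by simp
  have p: "p < length xs" using assms n
    by (metis Euclidean_Rings.pos_mod_bound Euclidean_Rings.pos_mod_sign nat_less_iff)
  have "nat (j mod int (length xs)) = p \<longleftrightarrow> j mod int (length xs) = k mod int (length xs)"
    using assms n by (metis Euclidean_Rings.pos_mod_sign nat_eq_iff2)
  moreover have "nat (j mod int (length xs)) < length xs" using n
    by (metis Euclidean_Rings.pos_mod_bound Euclidean_Rings.pos_mod_sign nat_less_iff)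
  ultimately show ?thesis by (auto simp: cyc_def nth_list_update)
qed

lemma mod_ne_shift:
  assumes "m \<ge> 4" "d \<in> {1,2,3,-1::int}"
  shows "(k + d) mod int m \<noteq> k mod int m"
proof
  assume "(k + d) mod int m = k mod int m"
  then have "int m dvd d" by (metis add.commute add_diff_cancel_left' mod_eq_dvd_iff)
  then show False using assms by (auto dest: zdvd_imp_le)
qed

context cay begin

lemma cay_main:
  assumes w: "wdrg V A" and q: "q > 3" and c: "type_circuit A (q-1) xs"
    and mn: "\<forall>ys. type_circuit A (q-1) ys \<longrightarrow> length xs \<le> length ys"
    and PI: "\<forall>ys. type_circuit A (q-1) ys \<and> length ys = length xs \<longrightarrow> (\<forall>j.
        Pset V A L (q-1,1) (cyc ys (j-2)) (cyc ys (j-1)) = Pset V A (1,q-1) (1,q-1) (cyc ys (j-1)) (cyc ys (j+1)) \<and>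
        Pset V A (q-1,1) L (cyc ys (j+1)) (cyc ys (j+2)) = Pset V A (1,q-1) (1,q-1) (cyc ys (j-1)) (cyc ys (j+1)))"
  shows "(\<lambda>y. y \<otimes> inv (cyc xs (i-1))) ` Pset V A (1,q-1) (1,q-1) (cyc xs (i-1)) (cyc xs (i+1))
       = (\<lambda>y. y \<otimes> inv (cyc xs i)) ` Pset V A (1,q-1) (1,q-1) (cyc xs i) (cyc xs (i+2))"
proof -
  define k where "k = i - 1"
  have ik: "i = k + 1" by (simp add: k_def)
  let ?X = "cyc xs"
  define m where "m = length xs"
  have ne: "xs \<noteq> []" using c by (simp add: type_circuit_def)
  have q3: "q \<ge> 3" using q by simp
  have m4: "m \<ge> 4" using circ_len_ge[OF w c] q by (simp add: m_def)
  have XV: "\<And>j. ?X j \<in> V" using circ_tdist[OF w q3 c] by blast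
  have XG: "\<And>j. ?X j \<in> carrier G" using XV V by auto
  have G: "\<And>j. garc A (q-1) (?X j) (?X (j+1))" using circuit_garc[OF c] by blast
  define z where "z = ?X (k-1) \<otimes> ?X (k+1) \<otimes> inv (?X k)"
  have zG: "z \<in> carrier G" using XG by (simp add: z_def)
  have zV: "z \<in> V" using zG V by simp
  define p where "p = nat (k mod int m)"
  define ys where "ys = xs[p := z]"
  have ylen: "length ys = m" by (simp add: ys_def m_def)
  have Ycyc: "\<And>j. cyc ys j = (if j mod int m = k mod int m then z else ?X j)"
    unfolding ys_def m_def using cyc_update[OF _ ne] p_def m_def by simp
  have nk: "\<And>d. d \<in> {1,2,3,-1::int} \<Longrightarrow> (k + d) mod int m \<noteq> k mod int m"
    using mod_ne_shift[OF m4] by blast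
  have Y0: "cyc ys k = z" using Ycyc by simp
  have Ym1: "cyc ys (k-1) = ?X (k-1)" using Ycyc nk[of "-1"] by simp
  have Y2: "cyc ys (k+2) = ?X (k+2)" using Ycyc nk[of 2] by simp
  have Y3: "cyc ys (k+3) = ?X (k+3)" using Ycyc nk[of 3] by simp
  have ga1: "garc A (q-1) z (?X (k+1))"
  proof -
    have "garc A (q-1) (?X (k-1) \<otimes> (?X (k+1) \<otimes> inv (?X k))) (?X k \<otimes> (?X (k+1) \<otimes> inv (?X k)))"
      using garc_tr[OF XV XV _ G[of "k-1"], of "?X (k+1) \<otimes> inv (?X k)"] XG by (simp add: V[symmetric])
    moreover have "?X (k-1) \<otimes> (?X (k+1) \<otimes> inv (?X k)) = z" using XG by (simp add: z_def m_assoc)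
    moreover have "?X k \<otimes> (?X (k+1) \<otimes> inv (?X k)) = ?X (k+1)" using XG by (simp add: gsimps)
    ultimately show ?thesis by simp
  qed
  have ga2: "garc A (q-1) (?X (k-1)) z"
  proof -
    have "garc A (q-1) (?X k \<otimes> (?X (k-1) \<otimes> inv (?X k))) (?X (k+1) \<otimes> (?X (k-1) \<otimes> inv (?X k)))"
      using garc_tr[OF XV XV _ G[of k], of "?X (k-1) \<otimes> inv (?X k)"] XG by (simp add: V[symmetric])
    moreover have "?X k \<otimes> (?X (k-1) \<otimes> inv (?X k)) = ?X (k-1)" using XG by (simp add: gsimps)
    moreover have "?X (k+1) \<otimes> (?X (k-1) \<otimes> inv (?X k)) = z" using XG by (simp add: z_def gsimps)
    ultimately show ?thesis by simp
  qed
  have Yg: "\<forall>j. garc A (q-1) (cyc ys j) (cyc ys (j+1))"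
  proof
    fix j :: int
    show "garc A (q-1) (cyc ys j) (cyc ys (j+1))"
    proof (cases "j mod int m = k mod int m")
      case True
      have "(j+1) mod int m = (k+1) mod int m" using True by (metis mod_add_left_eq)
      then have "(j+1) mod int m \<noteq> k mod int m" using nk[of 1] by simp
      moreover have "?X (j+1) = ?X (k+1)" using `(j+1) mod int m = (k+1) mod int m` cyc_mod_eq m_def by blast
      ultimately show ?thesis using Ycyc True ga1 by simp
    next
      case False
      show ?thesis
      proof (cases "(j+1) mod int m = k mod int m")
        case True2: True
        have "j mod int m = (k-1) mod int m" using True2 by (metis add_diff_cancel_right' mod_diff_left_eq)
        then have "?X j = ?X (k-1)" using cyc_mod_eq m_def by blast
        then show ?thesis using Ycyc False True2 ga2 by simp
      next
        case False2: False
        then show ?thesis using Ycyc False G by simp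
      qed
    qed
  qed
  have yc: "type_circuit A (q-1) ys"
    by (rule cyc_circuit) (use Yg mn ylen m_def ne in \<open>auto simp: ys_def\<close>)
  have PIy: "Pset V A L (q-1,1) (cyc ys (k+1-2)) (cyc ys (k+1-1)) = Pset V A (1,q-1) (1,q-1) (cyc ys (k+1-1)) (cyc ys (k+1+1)) \<and>
        Pset V A (q-1,1) L (cyc ys (k+1+1)) (cyc ys (k+1+2)) = Pset V A (1,q-1) (1,q-1) (cyc ys (k+1-1)) (cyc ys (k+1+1))"
    using PI yc ylen m_def by blast
  have e: "k+1-2 = k-1" "k+1-1 = k" "k+1+1 = k+2" "k+1+2 = k+3" "k+2-2 = k" "k+2-1 = k+1" "k+2+1 = k+3" by simp_all
  have P3a: "Pset V A L (q-1,1) (?X (k-1)) z = Pset V A (1,q-1) (1,q-1) z (?X (k+2))"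
    using PIy unfolding e Ym1 Y0 Y2 by simp
  have P3b: "Pset V A (q-1,1) L (?X (k+2)) (?X (k+3)) = Pset V A (1,q-1) (1,q-1) z (?X (k+2))"
    using PIy unfolding e Y0 Y2 Y3 by simp
  have PIx1: "Pset V A (q-1,1) L (?X (k+1+1)) (?X (k+1+2)) = Pset V A (1,q-1) (1,q-1) (?X (k+1-1)) (?X (k+1+1))"
    using PI c m_def by blast
  have P4: "Pset V A (q-1,1) L (?X (k+2)) (?X (k+3)) = Pset V A (1,q-1) (1,q-1) (?X k) (?X (k+2))"
    using PIx1 unfolding e by simp
  have PIx2: "Pset V A L (q-1,1) (?X (k+2-2)) (?X (k+2-1)) = Pset V A (1,q-1) (1,q-1) (?X (k+2-1)) (?X (k+2+1))"
    using PI c m_def by blast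
  have P1: "Pset V A L (q-1,1) (?X k) (?X (k+1)) = Pset V A (1,q-1) (1,q-1) (?X (k+1)) (?X (k+3))"
    using PIx2 unfolding e by simp
  define \<delta> where "\<delta> = ?X (k-1) \<otimes> inv (?X k)"
  have dG: "\<delta> \<in> carrier G" using XG by (simp add: \<delta>_def)
  have dV: "\<delta> \<in> V" using dG V by simp
  have tr1: "?X k \<otimes> \<delta> = ?X (k-1)" using XG by (simp add: \<delta>_def gsimps)
  have tr2: "?X (k+1) \<otimes> \<delta> = z" using XG by (simp add: \<delta>_def z_def gsimps)
  let ?Y1 = "Pset V A (1,q-1) (1,q-1) (?X k) (?X (k+2))"
  let ?Y2 = "Pset V A (1,q-1) (1,q-1) (?X (k+1)) (?X (k+3))"
  let ?Y'' = "Pset V A (1,q-1) (1,q-1) z (?X (k+2))"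
  have Y''Y1: "?Y'' = ?Y1" using P3b P4 by simp
  have Y''Y2: "?Y'' = (\<lambda>y. y \<otimes> \<delta>) ` ?Y2"
    using P3a Pset_tr[OF XV XV dV, of L "(q-1,1)" k "k+1"] P1 tr1 tr2 by simp
  have Y2V: "?Y2 \<subseteq> V" by (auto simp: Pset_def)
  have "(\<lambda>y. y \<otimes> inv (?X k)) ` ?Y1 = (\<lambda>y. ?X (k+2) \<otimes> inv y) ` ?Y1" by (rule sym_P[OF XV XV])
  also have "\<dots> = (\<lambda>y. ?X (k+2) \<otimes> inv y) ` ?Y''" using Y''Y1 by simp
  also have "\<dots> = (\<lambda>y. y \<otimes> inv z) ` ?Y''" by (rule sym_P[OF zV XV, symmetric])
  also have "\<dots> = (\<lambda>y. y \<otimes> \<delta> \<otimes> inv z) ` ?Y2" unfolding Y''Y2 image_image by simp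
  also have "\<dots> = (\<lambda>y. y \<otimes> inv (?X (k+1))) ` ?Y2"
  proof (rule image_cong[OF refl])
    fix y assume "y \<in> ?Y2"
    then have yG: "y \<in> carrier G" using Y2V V by auto
    have "\<delta> \<otimes> inv z = inv (?X (k+1))" using XG by (simp add: \<delta>_def z_def gsimps)
    then show "y \<otimes> \<delta> \<otimes> inv z = y \<otimes> inv (?X (k+1))" using yG dG zG by (simp add: m_assoc)
  qed
  finally show ?thesis unfolding ik by (simp add: algebra_simps)
qed

end


theorem lemma2p7:
  fixes V :: "'a set" and A :: "('a \<times> 'a) set" and q :: nat
    and xs :: "'a list" and a b :: nat
  assumes "wdrg V A"
    and "q \<ge> 3"
    and "type_circuit A (q - 1) xs"
    and "\<forall>ys. type_circuit A (q - 1) ys \<longrightarrow> length xs \<le> length ys"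
    and "tdist A (cyc xs 0) (cyc xs 2) = (a, b)"
    and "kval V A (1, q - 1) \<ge> kval V A (a, b)"
    and "pnum V A (1, q - 1) (1, q - 1) (2, q - 2) > 0
         \<or> card {l. pnum V A (1, q - 1) (1, q - 1) l \<noteq> 0} = 1"
  shows "(\<forall>i::int.
            tdist A (cyc xs (i - 1)) (cyc xs (i + 1)) = (a, b) \<and>
            Pset V A (a, b) (q - 1, 1) (cyc xs (i - 2)) (cyc xs (i - 1))
              = Pset V A (1, q - 1) (1, q - 1) (cyc xs (i - 1)) (cyc xs (i + 1)) \<and>
            Pset V A (q - 1, 1) (a, b) (cyc xs (i + 1)) (cyc xs (i + 2))
              = Pset V A (1, q - 1) (1, q - 1) (cyc xs (i - 1)) (cyc xs (i + 1)))
       \<and> (\<forall>(G :: 'a monoid) S.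
            q > 3 \<and> comm_group G \<and> carrier G = V \<and> S \<subseteq> V - {\<one>\<^bsub>G\<^esub>} \<and>
            A = {(x, y). x \<in> V \<and> y \<in> V \<and> y \<otimes>\<^bsub>G\<^esub> inv\<^bsub>G\<^esub> x \<in> S}
            \<longrightarrow> (\<forall>i::int.
                  (\<lambda>y. y \<otimes>\<^bsub>G\<^esub> inv\<^bsub>G\<^esub> (cyc xs (i - 1)))
                    ` Pset V A (1, q - 1) (1, q - 1) (cyc xs (i - 1)) (cyc xs (i + 1))
                  = (\<lambda>y. y \<otimes>\<^bsub>G\<^esub> inv\<^bsub>G\<^esub> (cyc xs i))
                    ` Pset V A (1, q - 1) (1, q - 1) (cyc xs i) (cyc xs (i + 2))))"
proof -
  have w: "wdrg V A" and q: "q \<ge> 3" using assms by auto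
  obtain L where LP: "\<forall>ys. type_circuit A (q-1) ys \<and> length ys = length xs \<longrightarrow> Lprop V A q L ys"
    using Lprops[OF assms(1,2,7), of "length xs" xs] assms(3,4) by blast
  have Lx: "Lprop V A q L xs" using LP assms(3) by blast
  have "tdist A (cyc xs (1-1)) (cyc xs (1+1)) = L" using Lx unfolding Lprop_def by blast
  then have ab: "(a,b) = L" using assms(5) by simp
  have kL: "kval V A L \<le> kval V A (1,q-1)" using assms(6) ab by simp
  have PI: "\<forall>ys. type_circuit A (q-1) ys \<and> length ys = length xs \<longrightarrow> (\<forall>j.
        Pset V A L (q-1,1) (cyc ys (j-2)) (cyc ys (j-1)) = Pset V A (1,q-1) (1,q-1) (cyc ys (j-1)) (cyc ys (j+1)) \<and>
        Pset V A (q-1,1) L (cyc ys (j+1)) (cyc ys (j+2)) = Pset V A (1,q-1) (1,q-1) (cyc ys (j-1)) (cyc ys (j+1)))"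
  proof (intro allI impI)
    fix ys j assume ys: "type_circuit A (q-1) ys \<and> length ys = length xs"
    then have "Lprop V A q L ys" using LP by blast
    then show "Pset V A L (q-1,1) (cyc ys (j-2)) (cyc ys (j-1)) = Pset V A (1,q-1) (1,q-1) (cyc ys (j-1)) (cyc ys (j+1)) \<and>
        Pset V A (q-1,1) L (cyc ys (j+1)) (cyc ys (j+2)) = Pset V A (1,q-1) (1,q-1) (cyc ys (j-1)) (cyc ys (j+1))"
      using partI[OF w q _ _ _ kL] ys unfolding Lprop_def by blast
  qed
  show ?thesis
  proof (intro conjI allI impI)
    fix i :: int
    show "tdist A (cyc xs (i - 1)) (cyc xs (i + 1)) = (a, b)" using Lx ab unfolding Lprop_def by simp
    show "Pset V A (a, b) (q - 1, 1) (cyc xs (i - 2)) (cyc xs (i - 1))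
              = Pset V A (1, q - 1) (1, q - 1) (cyc xs (i - 1)) (cyc xs (i + 1))"
      using PI assms(3) ab by simp
    show "Pset V A (q - 1, 1) (a, b) (cyc xs (i + 1)) (cyc xs (i + 2))
              = Pset V A (1, q - 1) (1, q - 1) (cyc xs (i - 1)) (cyc xs (i + 1))"
      using PI assms(3) ab by simp
  next
    fix G :: "'a monoid" and S i
    assume h: "q > 3 \<and> comm_group G \<and> carrier G = V \<and> S \<subseteq> V - {\<one>\<^bsub>G\<^esub>} \<and>
            A = {(x, y). x \<in> V \<and> y \<in> V \<and> y \<otimes>\<^bsub>G\<^esub> inv\<^bsub>G\<^esub> x \<in> S}"
    interpret cay G V A S
      by (rule cay.intro) (use h in \<open>auto simp: cay_axioms_def\<close>)
    show "(\<lambda>y. y \<otimes>\<^bsub>G\<^esub> inv\<^bsub>G\<^esub> (cyc xs (i - 1)))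
                    ` Pset V A (1, q - 1) (1, q - 1) (cyc xs (i - 1)) (cyc xs (i + 1))
                  = (\<lambda>y. y \<otimes>\<^bsub>G\<^esub> inv\<^bsub>G\<^esub> (cyc xs i))
                    ` Pset V A (1, q - 1) (1, q - 1) (cyc xs i) (cyc xs (i + 2))"
      using cay_main[OF w _ assms(3,4) PI] h by blast
  qed
qed


end
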